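(* Let $X$ be a Banach space, $F\colon X\to\mathbb{R}$ locally Lipschitz at $\bar x\in X$, $(u,v)\in X\times X$, and let $\{(t_k,v^k)\}\subset(0,\infty)\times X$ with $t_k\downarrow 0$, $v^k\to v$, and $F\left(\bar x+t_ku+\tfrac12t_k^2v^k\right)\geqq F(\bar x)$ for all $k\in\mathbb{N}$. If $F^{\circ}(\bar x,u)=0$, then $F^{\circ}(\bar x,v)+F^{\circ\circ}(\bar x,u)\geqq 0$.
   Context: $F$ is locally Lipschitz at $\bar x$ if there are a neighborhood $U$ of $\bar x$ and $L\geqq 0$ with $|F(x)-F(y)|\leqq L\|x-y\|$ for all $x,y\in U$. Clarke's generalized directional derivative: $F^{\circ}(\bar x,u):=\limsup_{x\to\bar x,\ t\downarrow 0}\frac{F(x+tu)-F(x)}{t}$ (finite). Second-order upper generalized directional derivative: $F^{\circ\circ}(\bar x,u):=\limsup_{t\downarrow 0}\frac{F(\bar x+tu)-F(\bar x)-tF^{\circ}(\bar x,u)}{\frac12 t^2}$ (a value in $[-\infty,+\infty]$). *)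

theory Defs
  imports "HOL-Analysis.Analysis"
begin

definition locally_lipschitz_at :: "('a::real_normed_vector \<Rightarrow> real) \<Rightarrow> 'a \<Rightarrow> bool" where
  "locally_lipschitz_at F xbar \<longleftrightarrow>
     (\<exists>U L. open U \<and> xbar \<in> U \<and> L \<ge> 0 \<and>
        (\<forall>x\<in>U. \<forall>y\<in>U. \<bar>F x - F y\<bar> \<le> L * norm (x - y)))"

text \<open>Clarke's generalized directional derivative: limsup over x tending to xbar
  and t tending to 0 from the right (finite for locally Lipschitz F).\<close>
definition clarke_dd :: "('a::real_normed_vector \<Rightarrow> real) \<Rightarrow> 'a \<Rightarrow> 'a \<Rightarrow> real" where
  "clarke_dd F xbar u =
     real_of_ereal (Limsup (nhds xbar \<times>\<^sub>F at_right (0::real))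
        (\<lambda>(x, t). ereal ((F (x + t *\<^sub>R u) - F x) / t)))"

definition clarke_dd2 :: "('a::real_normed_vector \<Rightarrow> real) \<Rightarrow> 'a \<Rightarrow> 'a \<Rightarrow> ereal" where
  "clarke_dd2 F xbar u =
     Limsup (at_right (0::real))
        (\<lambda>t. ereal ((F (xbar + t *\<^sub>R u) - F xbar - t * clarke_dd F xbar u) / (t\<^sup>2 / 2)))"

end

theory Submission
  imports Defs
begin

theorem lemma2:
  fixes F :: "'a::banach \<Rightarrow> real" and xbar u v :: 'a
    and t :: "nat \<Rightarrow> real" and vs :: "nat \<Rightarrow> 'a"
  assumes "locally_lipschitz_at F xbar"
    and "\<And>k. t k > 0"
    and "decseq t" and "t \<longlonglongrightarrow> 0"
    and "vs \<longlonglongrightarrow> v"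
    and "\<And>k. F (xbar + t k *\<^sub>R u + ((t k)\<^sup>2 / 2) *\<^sub>R vs k) \<ge> F xbar"
    and "clarke_dd F xbar u = 0"
  shows "ereal (clarke_dd F xbar v) + clarke_dd2 F xbar u \<ge> 0"
proof (rule ccontr)
  assume neg: "\<not> ?thesis"
  obtain U L where U: "open U" "xbar \<in> U" "L \<ge> 0"
    and Lip: "\<And>x y. x \<in> U \<Longrightarrow> y \<in> U \<Longrightarrow> \<bar>F x - F y\<bar> \<le> L * norm (x - y)"
    using assms(1) unfolding locally_lipschitz_at_def by blast
  obtain r0 where r0: "r0 > 0" "ball xbar r0 \<subseteq> U"
    using U open_contains_ball by blast
  define C where "C = clarke_dd F xbar v"
  define D where "D = clarke_dd2 F xbar u"
  define g where "g = (\<lambda>(x, t). ereal ((F (x + t *\<^sub>R v) - F x) / t))"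
  define Lv where "Lv = Limsup (nhds xbar \<times>\<^sub>F at_right (0::real)) g"
  have C_def': "C = real_of_ereal Lv" unfolding C_def Lv_def g_def clarke_dd_def by simp
  have dd_u: "D = Limsup (at_right (0::real))
        (\<lambda>t. ereal ((F (xbar + t *\<^sub>R u) - F xbar - t * 0) / (t\<^sup>2 / 2)))"
    unfolding D_def clarke_dd2_def using assms(7) by simp
  have ev_g: "eventually (\<lambda>p. g p \<le> ereal (L * norm v)) (nhds xbar \<times>\<^sub>F at_right (0::real))"
  proof -
    define d where "d = r0 / (2 * (norm v + 1))"
    have d: "d > 0" using r0 unfolding d_def by (smt (verit) divide_pos_pos norm_ge_zero)
    have e1: "eventually (\<lambda>x. x \<in> ball xbar (r0/2)) (nhds xbar)"
      using r0 by (intro eventually_nhds_in_open) auto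
    have e2: "eventually (\<lambda>s::real. 0 < s \<and> s < d) (at_right 0)"
      by (rule eventually_mono[OF eventually_at_right_real[OF d]]) auto
    show ?thesis unfolding eventually_prod_filter
    proof (intro exI conjI allI impI)
      show "eventually (\<lambda>x. x \<in> ball xbar (r0/2)) (nhds xbar)" by (fact e1)
      show "eventually (\<lambda>s::real. 0 < s \<and> s < d) (at_right 0)" by (fact e2)
      fix x and s :: real
      assume x: "x \<in> ball xbar (r0/2)" and s: "0 < s \<and> s < d"
      have "norm (s *\<^sub>R v) \<le> d * norm v" using s by (simp add: mult_right_mono)
      also have "d * norm v < r0/2"
      proof -
        have "d * norm v \<le> d * (norm v + 1)" using d by simp
        have nz: "norm v + 1 \<noteq> 0" by (smt (verit) norm_ge_zero)
        have "d * (norm v + 1) = r0/2" unfolding d_def using nz by (simp add: field_simps)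
        moreover have "d * norm v < d * (norm v + 1)" using d by simp
        ultimately show ?thesis using \<open>d * (norm v + 1) = r0/2\<close> by linarith
      qed
      finally have "norm (s *\<^sub>R v) < r0/2" .
      moreover have "dist x (x + s *\<^sub>R v) = norm (s *\<^sub>R v)" by (simp add: dist_norm)
      moreover have "dist xbar (x + s *\<^sub>R v) \<le> dist xbar x + dist x (x + s *\<^sub>R v)"
        by (rule dist_triangle)
      moreover have "dist xbar x < r0/2" using x by simp
      ultimately have "x + s *\<^sub>R v \<in> ball xbar r0" by simp
      moreover have "x \<in> ball xbar r0" using x zero_le_dist[of xbar x] unfolding mem_ball by linarith
      ultimately have "\<bar>F (x + s *\<^sub>R v) - F x\<bar> \<le> L * norm (s *\<^sub>R v)"
        using r0 Lip by (metis add_diff_cancel_left' subsetD)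
      hence "F (x + s *\<^sub>R v) - F x \<le> s * (L * norm v)" using s by (simp add: mult.left_commute)
      hence "(F (x + s *\<^sub>R v) - F x) / s \<le> L * norm v" using s by (simp add: divide_le_eq mult.commute)
      thus "g (x, s) \<le> ereal (L * norm v)" unfolding g_def by simp
    qed
  qed
  have Lv_fin: "Lv \<noteq> \<infinity>"
  proof -
    have "Lv \<le> ereal (L * norm v)" unfolding Lv_def by (rule Limsup_bounded[OF ev_g])
    thus ?thesis by auto
  qed
  have "D < ereal (- C)"
    using neg unfolding C_def D_def by (cases "clarke_dd2 F xbar u") auto
  then obtain r where r: "D < ereal r" "r < - C"
    using ereal_dense2 by (metis ereal_less(1) less_ereal.simps(1) order_less_trans)
  define e where "e = (- C - r) / 3"
  have e: "e > 0" using r unfolding e_def by simp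
  have Lv_lt: "Lv < ereal (C + e)"
    using Lv_fin e unfolding C_def' by (cases Lv) auto
  define s where "s = (\<lambda>k. (t k)\<^sup>2 / 2)"
  define y where "y = (\<lambda>k. xbar + t k *\<^sub>R u)"
  have s_pos: "\<And>k. s k > 0" unfolding s_def using assms(2) by (metis half_gt_zero zero_less_power)
  have s0: "s \<longlonglongrightarrow> 0"
    unfolding s_def using tendsto_divide[OF tendsto_power[OF assms(4), of 2] tendsto_const, of 2] by simp
  have y0: "y \<longlonglongrightarrow> xbar"
    unfolding y_def using tendsto_add[OF tendsto_const tendsto_scaleR[OF assms(4) tendsto_const], of xbar u]
    by simp
  have t_at: "filterlim t (at_right 0) sequentially"
    unfolding filterlim_at using assms(2,4) by (auto intro!: always_eventually simp: less_imp_neq[symmetric])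
  have s_at: "filterlim s (at_right 0) sequentially"
    unfolding filterlim_at using s_pos s0 by (auto intro!: always_eventually simp: less_imp_neq[symmetric])
  have ys: "filterlim (\<lambda>k. (y k, s k)) (nhds xbar \<times>\<^sub>F at_right 0) sequentially"
    by (rule filterlim_Pair[OF y0 s_at])
  have evc: "eventually (\<lambda>k. (F (xbar + t k *\<^sub>R u) - F xbar - t k * 0) / ((t k)\<^sup>2 / 2) < r) sequentially"
  proof -
    have "eventually (\<lambda>t. ereal ((F (xbar + t *\<^sub>R u) - F xbar - t * 0) / (t\<^sup>2 / 2)) < ereal r) (at_right (0::real))"
      using Limsup_lessD r(1) unfolding dd_u by blast
    from eventually_compose_filterlim[OF this t_at] show ?thesis by simp
  qed
  have evb: "eventually (\<lambda>k. (F (y k + s k *\<^sub>R v) - F (y k)) / s k < C + e) sequentially"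
  proof -
    have "eventually (\<lambda>p. g p < ereal (C + e)) (nhds xbar \<times>\<^sub>F at_right (0::real))"
      using Limsup_lessD Lv_lt unfolding Lv_def by blast
    from eventually_compose_filterlim[OF this ys] show ?thesis by (simp add: g_def)
  qed
  have eva: "eventually (\<lambda>k. (F (y k + s k *\<^sub>R vs k) - F (y k + s k *\<^sub>R v)) / s k < e) sequentially"
  proof -
    have "bounded (range vs)" using assms(5) convergent_imp_bounded by blast
    then obtain B where B: "B > 0" "\<And>k. norm (vs k) \<le> B"
      by (meson bounded_pos rangeI)
    have m: "((\<lambda>k. y k + s k *\<^sub>R vs k) \<longlonglongrightarrow> xbar)"
    proof -
      have "(\<lambda>k. s k *\<^sub>R vs k) \<longlonglongrightarrow> 0 *\<^sub>R v"
        by (intro tendsto_scaleR s0 assms(5))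
      from tendsto_add[OF y0 this] show ?thesis by simp
    qed
    have m2: "((\<lambda>k. y k + s k *\<^sub>R v) \<longlonglongrightarrow> xbar)"
    proof -
      have "(\<lambda>k. s k *\<^sub>R v) \<longlonglongrightarrow> 0 *\<^sub>R v"
        by (intro tendsto_scaleR s0 tendsto_const)
      from tendsto_add[OF y0 this] show ?thesis by simp
    qed
    have e1: "eventually (\<lambda>k. y k + s k *\<^sub>R vs k \<in> U) sequentially"
      using m U(1,2) by (simp add: tendsto_def)
    have e2: "eventually (\<lambda>k. y k + s k *\<^sub>R v \<in> U) sequentially"
      using m2 U(1,2) by (simp add: tendsto_def)
    have e3: "eventually (\<lambda>k. dist (vs k) v < e / (L + 1)) sequentially"
      using assms(5) e U(3) by (simp add: tendsto_iff)
    show ?thesis using e1 e2 e3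
    proof eventually_elim
      case (elim k)
      have "\<bar>F (y k + s k *\<^sub>R vs k) - F (y k + s k *\<^sub>R v)\<bar> \<le> L * norm (s k *\<^sub>R (vs k - v))"
        using Lip[OF elim(1,2)] by (simp add: scaleR_diff_right)
      also have "\<dots> = s k * (L * norm (vs k - v))" using s_pos[of k] by simp
      also have "\<dots> \<le> s k * (L * (e / (L + 1)))"
        using elim(3) s_pos[of k] U(3) by (intro mult_left_mono) (auto simp: dist_norm)
      also have "\<dots> < s k * e"
      proof -
        have "L * (e / (L+1)) < e" using U(3) e by (simp add: field_simps)
        thus ?thesis using s_pos[of k] mult_strict_left_mono by blast
      qed
      finally have "F (y k + s k *\<^sub>R vs k) - F (y k + s k *\<^sub>R v) < s k * e" by simp
      thus ?case using s_pos[of k] by (metis divide_less_eq mult.commute)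
    qed
  qed
  from eventually_conj[OF eva eventually_conj[OF evb evc]]
  obtain N where N: "\<forall>n\<ge>N. (F (y n + s n *\<^sub>R vs n) - F (y n + s n *\<^sub>R v)) / s n < e \<and>
    (F (y n + s n *\<^sub>R v) - F (y n)) / s n < C + e \<and>
    (F (xbar + t n *\<^sub>R u) - F xbar - t n * 0) / ((t n)\<^sup>2 / 2) < r"
    unfolding eventually_sequentially by blast
  define k where "k = N"
  have k: "(F (y k + s k *\<^sub>R vs k) - F (y k + s k *\<^sub>R v)) / s k < e"
    "(F (y k + s k *\<^sub>R v) - F (y k)) / s k < C + e"
    "(F (xbar + t k *\<^sub>R u) - F xbar - t k * 0) / ((t k)\<^sup>2 / 2) < r"
    using N[rule_format, OF order_refl] unfolding k_def by auto
  have sum: "(F (y k + s k *\<^sub>R vs k) - F (y k + s k *\<^sub>R v)) / s k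
     + (F (y k + s k *\<^sub>R v) - F (y k)) / s k
     + (F (xbar + t k *\<^sub>R u) - F xbar - t k * 0) / ((t k)\<^sup>2 / 2)
     = (F (xbar + t k *\<^sub>R u + ((t k)\<^sup>2 / 2) *\<^sub>R vs k) - F xbar) / s k"
    using s_pos[of k] unfolding s_def y_def by (simp add: field_simps)
  have "(F (xbar + t k *\<^sub>R u + ((t k)\<^sup>2 / 2) *\<^sub>R vs k) - F xbar) / s k \<ge> 0"
    using assms(6)[of k] s_pos[of k] by simp
  moreover have "e + (C + e) + r < 0" unfolding e_def using r(2) by (simp add: field_simps)
  ultimately show False using k sum by linarith
qed

end
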